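(* Let $X$ be a nonsingular variety over an algebraically closed field, $E\to X$ a vector bundle of rank $n$, $0<q<n$, $r=n-q$, and $\pi:G^q(E)\to X$ the Grassmann bundle of rank $q$ quotients with tautological sequence $0\to S\to\pi^*E\to Q\to0$; let $x_1,\dots,x_q$ be the Chern roots of $Q$ and $x_{q+1},\dots,x_n$ those of $S$. Then for all sequences $\lambda=(\lambda_1,\dots,\lambda_q)$ and $\mu=(\mu_1,\dots,\mu_r)$ of nonnegative integers, $$\pi_*\Bigl(\prod_{1\le i\le q<j\le n}(x_i-tx_j)\,P_\lambda(Q;t)\,P_\mu(S;t)\Bigr)=\frac{v_{\lambda\mu}(t)}{v_\lambda(t)\,v_\mu(t)}\,P_{\lambda\mu}(E;t),$$ where $\lambda\mu=(\lambda_1,\dots,\lambda_q,\mu_1,\dots,\mu_r)$.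
   Context: $A(\cdot)$ is the Chow group, $t$ an indeterminate, push-forwards act coefficientwise in $t$. For a rank $m$ bundle $F$ on $Y$, $\tau_F:Fl(F)\to Y$ is the complete flag bundle of quotients of ranks $m,\dots,1$ with Chern roots $z_1,\dots,z_m$ ordered so that $(\tau_F)_*f(z)=\sum_{w\in S_m}w\bigl(f(y)/\prod_{i<j}(y_i-y_j)\bigr)$ evaluated at the Chern roots of $F$; for a sequence $\lambda$ of $m$ nonnegative integers, $R_\lambda(F;t)=(\tau_F)_*\bigl(z_1^{\lambda_1}\cdots z_m^{\lambda_m}\prod_{i<j}(z_i-tz_j)\bigr)$. $v_m(t)=\prod_{i=1}^m\frac{1-t^i}{1-t}$; $v_\lambda(t)=\prod_iv_{m_i}(t)$ where $m_1,\dots,m_d$ are the cardinalities of the level sets of $\lambda$ (maximal subsets of indices on which $\lambda$ is constant); $P_\lambda(F;t)=R_\lambda(F;t)/v_\lambda(t)$, a polynomial in $t$ and the Chern classes of $F$. The Gysin map of the Grassmann bundle is: for $f$ symmetric separately in $y_1,\dots,y_q$ and in $y_{q+1},\dots,y_n$, $\pi_*f(x_1,\dots,x_n)=\sum_{w\in S_n/(S_q\times S_r)}w\bigl(f(y)/\prod_{i\le q<j}(y_i-y_j)\bigr)$ evaluated at the Chern roots of $E$. The ratio $v_{\lambda\mu}/(v_\lambda v_\mu)$ is a polynomial in $t$. *)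

theory Defs
  imports "HOL-Combinatorics.Permutations"
begin

text \<open>Everything is expressed in terms of Chern roots, which are modelled as
  values y 0, ..., y (m-1) in a field.  Index i of the paper corresponds to i-1 here.\<close>

text \<open>Gysin map of the complete flag bundle of a rank m bundle F whose Chern roots
  are y 0, ..., y (m-1):  sum over w in S_m of w (f(y) / prod_{i<j} (y_i - y_j)).\<close>
definition flag_push :: "nat \<Rightarrow> ((nat \<Rightarrow> 'a::field) \<Rightarrow> 'a) \<Rightarrow> (nat \<Rightarrow> 'a) \<Rightarrow> 'a" where
  "flag_push m f y =
     (\<Sum>w | w permutes {..<m}.
        f (y \<circ> w) / (\<Prod>i<m. \<Prod>j\<in>{i<..<m}. (y (w i) - y (w j))))"

text \<open>R_lambda(F;t), where m = length lam is the rank of F.\<close>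
definition R_fn :: "nat list \<Rightarrow> (nat \<Rightarrow> 'a::field) \<Rightarrow> 'a \<Rightarrow> 'a" where
  "R_fn lam y t = flag_push (length lam)
      (\<lambda>z. (\<Prod>i<length lam. z i ^ (lam ! i)) *
            (\<Prod>i<length lam. \<Prod>j\<in>{i<..<length lam}. (z i - t * z j))) y"

text \<open>(1 - t^i)/(1 - t) as the polynomial 1 + t + ... + t^(i-1).\<close>
definition qint :: "nat \<Rightarrow> 'a::field \<Rightarrow> 'a" where
  "qint i t = (\<Sum>k<i. t ^ k)"

definition v_nat :: "nat \<Rightarrow> 'a::field \<Rightarrow> 'a" where
  "v_nat m t = (\<Prod>i\<in>{1..m}. qint i t)"

definition v_seq :: "nat list \<Rightarrow> 'a::field \<Rightarrow> 'a" where
  "v_seq lam t = (\<Prod>a\<in>set lam. v_nat (count_list lam a) t)"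

definition P_fn :: "nat list \<Rightarrow> (nat \<Rightarrow> 'a::field) \<Rightarrow> 'a \<Rightarrow> 'a" where
  "P_fn lam y t = R_fn lam y t / v_seq lam t"

text \<open>Gysin map of the Grassmann bundle G^q(E) of rank q quotients of a rank n bundle,
  with Chern roots y 0..y (n-1) of E.  The cosets S_n/(S_q x S_r) are represented by the
  shuffle permutations (increasing on {..<q} and on {q..<n}).\<close>
definition grass_push :: "nat \<Rightarrow> nat \<Rightarrow> ((nat \<Rightarrow> 'a::field) \<Rightarrow> 'a) \<Rightarrow> (nat \<Rightarrow> 'a) \<Rightarrow> 'a" where
  "grass_push q n f y =
     (\<Sum>w | w permutes {..<n} \<and> strict_mono_on {..<q} w \<and> strict_mono_on {q..<n} w.
        f (y \<circ> w) / (\<Prod>i<q. \<Prod>j\<in>{q..<n}. (y (w i) - y (w j))))"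

end

theory Submission
  imports Defs
begin

lemma smono_sorted_list:
  fixes w :: "nat \<Rightarrow> nat"
  assumes "strict_mono_on {a..<b} w"
  shows "sorted_list_of_set (w ` {a..<b}) = map w [a..<b]"
proof -
  have inj: "inj_on w {a..<b}" using assms strict_mono_on_imp_inj_on by blast
  have "sorted_wrt (<) (map w [a..<b])"
    unfolding sorted_wrt_iff_nth_less using assms
    apply (clarsimp simp: strict_mono_on_def)
    subgoal for i j by (drule spec[of _ "a+i"], drule spec[of _ "a+j"]) auto
    done
  moreover have "set (map w [a..<b]) = w ` {a..<b}" by simp
  moreover have "length (map w [a..<b]) = card (w ` {a..<b})"
    using card_image[OF inj] by simp
  ultimately show ?thesis
    using sorted_list_of_set.sorted_key_list_of_set_unique[of "w ` {a..<b}" "map w [a..<b]"] by simp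
qed

lemma smono_nth:
  fixes w :: "nat \<Rightarrow> nat"
  assumes "strict_mono_on {a..<b} w" "a \<le> i" "i < b"
  shows "w i = sorted_list_of_set (w ` {a..<b}) ! (i - a)"
  using assms by (simp add: smono_sorted_list)

definition Sh :: "nat \<Rightarrow> nat \<Rightarrow> (nat \<Rightarrow> nat) set" where
  "Sh q n = {w. w permutes {..<n} \<and> strict_mono_on {..<q} w \<and> strict_mono_on {q..<n} w}"

definition Yg :: "nat \<Rightarrow> nat \<Rightarrow> (nat \<Rightarrow> nat) set" where
  "Yg q n = {r. r permutes {..<n} \<and> r ` {..<q} = {..<q}}"

lemma perm_image_compl:
  fixes n q :: nat
  assumes "w permutes {..<n}" "q \<le> n"
  shows "w ` {q..<n} = {..<n} - w ` {..<q}"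
proof -
  have "{..<n} = {..<q} \<union> {q..<n}" using ivl_disj_un_one(2)[OF assms(2)] by simp
  hence "w ` {..<n} = w ` {..<q} \<union> w ` {q..<n}" by auto
  moreover have "w ` {..<q} \<inter> w ` {q..<n} = {}"
    using permutes_inj[OF assms(1)] by (auto simp: inj_def) (metis not_le)
  ultimately show ?thesis using permutes_image[OF assms(1)] by auto
qed

lemma shuffle_unique:
  assumes "w \<in> Sh q n" "w' \<in> Sh q n" "q \<le> n" "w ` {..<q} = w' ` {..<q}"
  shows "w = w'"
proof
  fix i
  have p: "w permutes {..<n}" "w' permutes {..<n}" using assms by (auto simp: Sh_def)
  have m: "strict_mono_on {0..<q} w" "strict_mono_on {q..<n} w"
     "strict_mono_on {0..<q} w'" "strict_mono_on {q..<n} w'"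
    using assms by (auto simp: Sh_def atLeast0LessThan)
  have e2: "w ` {q..<n} = w' ` {q..<n}"
    using perm_image_compl[OF p(1) assms(3)] perm_image_compl[OF p(2) assms(3)] assms(4) by simp
  show "w i = w' i"
  proof (cases "i < q")
    case True
    then show ?thesis using smono_nth[OF m(1), of i] smono_nth[OF m(3), of i] assms(4)
      by (simp add: atLeast0LessThan)
  next
    case False
    show ?thesis
    proof (cases "i < n")
      case True
      then show ?thesis using smono_nth[OF m(2), of i] smono_nth[OF m(4), of i] e2 False
        by simp
    next
      case False
      then show ?thesis using permutes_not_in[OF p(1)] permutes_not_in[OF p(2)] by simp
    qed
  qed
qed

lemma shuffle_exists:
  fixes p :: "nat \<Rightarrow> nat" and q n :: nat
  assumes p: "p permutes {..<n}" and qn: "q \<le> n"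
  shows "\<exists>w\<in>Sh q n. w ` {..<q} = p ` {..<q}"
proof -
  define A where "A = p ` {..<q}"
  define B where "B = {..<n} - A"
  define la where "la = sorted_list_of_set A"
  define lb where "lb = sorted_list_of_set B"
  have cA: "card A = q" unfolding A_def using card_image[OF permutes_inj_on[OF p]] by simp
  have An: "A \<subseteq> {..<n}" unfolding A_def using permutes_image[OF p] qn by auto
  have cB: "card B = n - q" unfolding B_def using An cA by (simp add: card_Diff_subset finite_subset)
  have fA: "finite A" "finite B" using An unfolding B_def by (auto intro: finite_subset)
  have la: "set la = A" "length la = q" "distinct la" "sorted_wrt (<) la"
    unfolding la_def using fA cA by auto
  have lb: "set lb = B" "length lb = n - q" "distinct lb" "sorted_wrt (<) lb"
    unfolding lb_def using fA cB by auto
  define w where "w i = (if i < q then la ! i else if i < n then lb ! (i - q) else i)" for i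
  have wA: "w i \<in> A" if "i < q" for i using that la unfolding w_def by auto
  have wB: "w i \<in> B" if "q \<le> i" "i < n" for i using that lb unfolding w_def by auto
  have inj: "inj_on w {..<n}"
  proof (rule inj_onI)
    fix i j assume ij: "i \<in> {..<n}" "j \<in> {..<n}" "w i = w j"
    show "i = j"
    proof (cases "i < q"; cases "j < q")
      assume "i < q" "j < q" then show ?thesis using ij la nth_eq_iff_index_eq unfolding w_def by metis
    next
      assume "i < q" "\<not> j < q" then show ?thesis using ij wA[of i] wB[of j] unfolding B_def by auto
    next
      assume "\<not> i < q" "j < q" then show ?thesis using ij wA[of j] wB[of i] unfolding B_def by auto
    next
      assume a: "\<not> i < q" "\<not> j < q"
      then have "lb ! (i - q) = lb ! (j - q)" using ij unfolding w_def by auto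
      then have "i - q = j - q" using lb a ij nth_eq_iff_index_eq[of lb "i-q" "j-q"] by auto
      then show ?thesis using a by auto
    qed
  qed
  have wperm: "w permutes {..<n}"
  proof (rule inj_imp_permutes[OF inj])
    show "w x \<in> {..<n}" if "x \<in> {..<n}" for x
      using that wA[of x] wB[of x] An unfolding B_def by (cases "x < q") auto
    show "w i = i" if "i \<notin> {..<n}" for i using that qn unfolding w_def by auto
  qed simp
  have m1: "strict_mono_on {..<q} w"
    unfolding strict_mono_on_def w_def using la sorted_wrt_nth_less by fastforce
  have m2: "strict_mono_on {q..<n} w"
  proof (rule strict_mono_onI)
    fix i j assume "i \<in> {q..<n}" "j \<in> {q..<n}" "i < j"
    then show "w i < w j" unfolding w_def using lb sorted_wrt_nth_less[of "(<)" lb "i-q" "j-q"] by auto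
  qed
  have "w ` {..<q} = A"
  proof -
    have "w ` {..<q} = (\<lambda>i. la ! i) ` {..<q}" unfolding w_def by auto
    also have "\<dots> = set la" using la(2) by (auto simp: set_conv_nth)
    finally show ?thesis using la(1) by simp
  qed
  then show ?thesis using wperm m1 m2 unfolding Sh_def A_def by auto
qed

lemma bij1:
  fixes q n :: nat
  assumes qn: "q \<le> n"
  shows "bij_betw (\<lambda>(w, r). w \<circ> r) (Sh q n \<times> Yg q n) {p. p permutes {..<n}}"
proof (rule bij_betw_imageI)
  show "inj_on (\<lambda>(w, r). w \<circ> r) (Sh q n \<times> Yg q n)"
  proof (rule inj_onI, clarsimp)
    fix w r w' r' assume w: "w \<in> Sh q n" "w' \<in> Sh q n" and r: "r \<in> Yg q n" "r' \<in> Yg q n"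
      and e: "w \<circ> r = w' \<circ> r'"
    have "w ` {..<q} = w ` (r ` {..<q})" using r by (simp add: Yg_def)
    also have "\<dots> = (w \<circ> r) ` {..<q}" by (rule image_comp)
    also have "\<dots> = (w' \<circ> r') ` {..<q}" using e by simp
    also have "\<dots> = w' ` (r' ` {..<q})" by (rule image_comp[symmetric])
    also have "\<dots> = w' ` {..<q}" using r by (simp add: Yg_def)
    finally have ww: "w = w'" using shuffle_unique[OF w qn] by simp
    have pw: "w permutes {..<n}" using w by (simp add: Sh_def)
    have "r = inv w \<circ> (w \<circ> r)" using permutes_inv_o(2)[OF pw] by (simp add: o_assoc)
    also have "\<dots> = (inv w \<circ> w) \<circ> r'" using e ww by (simp add: o_assoc)
    also have "\<dots> = r'" using permutes_inv_o(2)[OF pw] by simp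
    finally show "w = w' \<and> r = r'" using ww by simp
  qed
  show "(\<lambda>(w, r). w \<circ> r) ` (Sh q n \<times> Yg q n) = {p. p permutes {..<n}}"
  proof
    show "(\<lambda>(w, r). w \<circ> r) ` (Sh q n \<times> Yg q n) \<subseteq> {p. p permutes {..<n}}"
      by (auto simp: Sh_def Yg_def intro: permutes_compose)
    show "{p. p permutes {..<n}} \<subseteq> (\<lambda>(w, r). w \<circ> r) ` (Sh q n \<times> Yg q n)"
    proof
      fix p assume "p \<in> {p. p permutes {..<n}}"
      then have p: "p permutes {..<n}" by simp
      obtain w where w: "w \<in> Sh q n" "w ` {..<q} = p ` {..<q}" using shuffle_exists[OF p qn] by blast
      have pw: "w permutes {..<n}" using w by (simp add: Sh_def)
      define r where "r = inv w \<circ> p"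
      have "r permutes {..<n}" unfolding r_def by (rule permutes_compose[OF p permutes_inv[OF pw]])
      moreover have "r ` {..<q} = {..<q}"
      proof -
        have "r ` {..<q} = inv w ` (w ` {..<q})" unfolding r_def using w(2) by (simp add: image_image)
        also have "\<dots> = {..<q}" by (simp add: image_comp permutes_inv_o(2)[OF pw])
        finally show ?thesis .
      qed
      moreover have "w \<circ> r = p" unfolding r_def using permutes_inv_o(1)[OF pw] by (simp add: o_assoc)
      ultimately show "p \<in> (\<lambda>(w, r). w \<circ> r) ` (Sh q n \<times> Yg q n)"
        using w(1) by (auto simp: Yg_def image_iff intro!: bexI[of _ "(w, r)"])
    qed
  qed
qed

definition join :: "nat \<Rightarrow> nat \<Rightarrow> (nat \<Rightarrow> nat) \<Rightarrow> (nat \<Rightarrow> nat) \<Rightarrow> nat \<Rightarrow> nat" where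
  "join q n s u i = (if i < q then s i else if i < n then q + u (i - q) else i)"

lemma bij2:
  fixes q n :: nat
  assumes qn: "q \<le> n"
  shows "bij_betw (\<lambda>(s, u). join q n s u)
     ({s. s permutes {..<q}} \<times> {u. u permutes {..<n-q}}) (Yg q n)"
proof (rule bij_betw_imageI)
  show "inj_on (\<lambda>(s, u). join q n s u) ({s. s permutes {..<q}} \<times> {u. u permutes {..<n-q}})"
  proof (rule inj_onI, clarsimp)
    fix s u s' u' assume s: "s permutes {..<q}" "s' permutes {..<q}"
      and u: "u permutes {..<n-q}" "u' permutes {..<n-q}" and e: "join q n s u = join q n s' u'"
    have "s i = s' i" for i
    proof (cases "i < q")
      case True then show ?thesis using fun_cong[OF e, of i] by (simp add: join_def)
    next
      case False then show ?thesis using permutes_not_in[OF s(1)] permutes_not_in[OF s(2)] by simp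
    qed
    moreover have "u i = u' i" for i
    proof (cases "i < n - q")
      case True then have "q + i < n" by simp
      then show ?thesis using fun_cong[OF e, of "q + i"] by (simp add: join_def)
    next
      case False then show ?thesis using permutes_not_in[OF u(1)] permutes_not_in[OF u(2)] by simp
    qed
    ultimately show "s = s' \<and> u = u'" by auto
  qed
  show "(\<lambda>(s, u). join q n s u) ` ({s. s permutes {..<q}} \<times> {u. u permutes {..<n-q}}) = Yg q n"
  proof
    show "(\<lambda>(s, u). join q n s u) ` ({s. s permutes {..<q}} \<times> {u. u permutes {..<n-q}}) \<subseteq> Yg q n"
    proof clarsimp
      fix s u assume s: "s permutes {..<q}" and u: "u permutes {..<n-q}"
      have sq: "s i < q" if "i < q" for i using permutes_in_image[OF s] that by simp
      have un: "u i < n - q" if "i < n - q" for i using permutes_in_image[OF u] that by simp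
      have inj: "inj_on (join q n s u) {..<n}"
      proof (rule inj_onI)
        fix i j assume ij: "i \<in> {..<n}" "j \<in> {..<n}" "join q n s u i = join q n s u j"
        show "i = j"
        proof (cases "i < q"; cases "j < q")
          assume "i < q" "j < q" then show ?thesis using ij permutes_inj[OF s] by (simp add: join_def inj_def)
        next
          assume "i < q" "\<not> j < q" then show ?thesis using ij sq[of i] by (simp add: join_def)
        next
          assume "\<not> i < q" "j < q" then show ?thesis using ij sq[of j] by (simp add: join_def)
        next
          assume a: "\<not> i < q" "\<not> j < q"
          then have "u (i - q) = u (j - q)" using ij by (simp add: join_def)
          then have "i - q = j - q" using permutes_inj[OF u] by (simp add: inj_def)
          then show ?thesis using a by simp
        qed
      qed
      have jp: "join q n s u permutes {..<n}"
      proof (rule inj_imp_permutes[OF inj])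
        show "join q n s u x \<in> {..<n}" if "x \<in> {..<n}" for x
          using that sq[of x] un[of "x - q"] qn by (auto simp: join_def less_diff_conv)
        show "join q n s u i = i" if "i \<notin> {..<n}" for i using that qn by (auto simp: join_def)
      qed simp
      have "join q n s u ` {..<q} = s ` {..<q}" by (auto simp: join_def)
      also have "\<dots> = {..<q}" by (rule permutes_image[OF s])
      finally show "join q n s u \<in> Yg q n" using jp by (simp add: Yg_def)
    qed
    show "Yg q n \<subseteq> (\<lambda>(s, u). join q n s u) ` ({s. s permutes {..<q}} \<times> {u. u permutes {..<n-q}})"
    proof
      fix r assume "r \<in> Yg q n"
      then have r: "r permutes {..<n}" "r ` {..<q} = {..<q}" by (auto simp: Yg_def)
      have rq: "r ` {q..<n} = {q..<n}"
        using perm_image_compl[OF r(1) qn] r(2) qn by auto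
      define s where "s i = (if i < q then r i else i)" for i
      define u where "u i = (if i < n - q then r (q + i) - q else i)" for i
      have "s permutes {..<q}"
      proof (rule inj_imp_permutes)
        show "inj_on s {..<q}" using permutes_inj[OF r(1)] by (auto simp: s_def inj_on_def inj_def)
        show "s x \<in> {..<q}" if "x \<in> {..<q}" for x using that r(2) by (auto simp: s_def)
        show "s i = i" if "i \<notin> {..<q}" for i using that by (simp add: s_def)
      qed simp
      moreover have "u permutes {..<n-q}"
      proof (rule inj_imp_permutes)
        have ge: "q \<le> r (q + i) \<and> r (q + i) < n" if "i < n - q" for i
          using rq that by (metis add.commute atLeastLessThan_iff image_eqI le_add2 less_diff_conv)
        show "inj_on u {..<n-q}"
        proof (rule inj_onI)
          fix i j assume ij: "i \<in> {..<n-q}" "j \<in> {..<n-q}" "u i = u j"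
          then have "r (q + i) - q = r (q + j) - q" by (simp add: u_def)
          moreover have "q \<le> r (q + i)" "q \<le> r (q + j)" using ge ij by auto
          ultimately have "r (q + i) = r (q + j)" by linarith
          then show "i = j" using permutes_inj[OF r(1)] unfolding inj_def by fastforce
        qed
        show "u x \<in> {..<n-q}" if "x \<in> {..<n-q}" for x using that ge[of x] by (auto simp: u_def)
        show "u i = i" if "i \<notin> {..<n-q}" for i using that by (simp add: u_def)
      qed simp
      moreover have "join q n s u = r"
      proof
        fix i
        show "join q n s u i = r i"
        proof (cases "i < q")
          case True then show ?thesis by (simp add: join_def s_def)
        next
          case False
          show ?thesis
          proof (cases "i < n")
            case True
            then have "r i \<in> {q..<n}" using rq False by auto
            moreover have "i - q < n - q" using True False by linarith
            ultimately show ?thesis using True False by (simp add: join_def u_def)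
          next
            case F2: False then show ?thesis using False permutes_not_in[OF r(1)] by (simp add: join_def)
          qed
        qed
      qed
      ultimately show "r \<in> (\<lambda>(s, u). join q n s u) ` ({s. s permutes {..<q}} \<times> {u. u permutes {..<n-q}})"
        by (auto simp: image_iff intro!: bexI[of _ "(s, u)"])
    qed
  qed
qed

definition pp :: "('a \<Rightarrow> 'a \<Rightarrow> 'b::comm_monoid_mult) \<Rightarrow> (nat \<Rightarrow> 'a) \<Rightarrow> nat \<Rightarrow> 'b" where
  "pp F z m = (\<Prod>i<m. \<Prod>j\<in>{i<..<m}. F (z i) (z j))"

definition cr :: "('a \<Rightarrow> 'a \<Rightarrow> 'b::comm_monoid_mult) \<Rightarrow> (nat \<Rightarrow> 'a) \<Rightarrow> nat \<Rightarrow> nat \<Rightarrow> 'b" where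
  "cr F z q n = (\<Prod>i<q. \<Prod>j\<in>{q..<n}. F (z i) (z j))"

definition ex :: "nat list \<Rightarrow> (nat \<Rightarrow> 'a::comm_monoid_mult) \<Rightarrow> 'a" where
  "ex lam z = (\<Prod>i<length lam. z i ^ (lam ! i))"

lemma shift_img1:
  fixes a b :: nat assumes "a \<le> b"
  shows "{a..<b} = (\<lambda>l. a + l) ` {..<b - a}"
proof (rule set_eqI, rule iffI)
  fix x assume "x \<in> {a..<b}" then show "x \<in> (\<lambda>l. a + l) ` {..<b - a}"
    by (intro image_eqI[of _ _ "x - a"]) auto
qed (use assms in auto)

lemma shift_img2:
  fixes a b k :: nat
  shows "{a + k<..<b} = (\<lambda>l. a + l) ` {k<..<b - a}"
proof (rule set_eqI, rule iffI)
  fix x assume "x \<in> {a + k<..<b}" then show "x \<in> (\<lambda>l. a + l) ` {k<..<b - a}"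
    by (intro image_eqI[of _ _ "x - a"]) auto
qed auto

lemma pp_split:
  fixes q n :: nat
  assumes "q \<le> n"
  shows "pp F z n = pp F z q * cr F z q n * pp F (\<lambda>k. z (q + k)) (n - q)"
proof -
  have U: "{..<n} = {..<q} \<union> {q..<n}" using ivl_disj_un_one(2)[OF assms] by simp
  have inner1: "(\<Prod>j\<in>{i<..<n}. F (z i) (z j)) =
      (\<Prod>j\<in>{i<..<q}. F (z i) (z j)) * (\<Prod>j\<in>{q..<n}. F (z i) (z j))" if "i < q" for i
  proof -
    have e: "{i<..<n} = {i<..<q} \<union> {q..<n}" using that assms by auto
    show ?thesis unfolding e by (rule prod.union_disjoint) auto
  qed
  have part1: "(\<Prod>i<q. \<Prod>j\<in>{i<..<n}. F (z i) (z j)) = pp F z q * cr F z q n"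
    by (simp add: inner1 prod.distrib pp_def cr_def)
  have img: "{q..<n} = (\<lambda>k. q + k) ` {..<n - q}"
    using shift_img1[OF assms] .
  have img2: "{q + k<..<n} = (\<lambda>l. q + l) ` {k<..<n - q}" for k
    using shift_img2 .
  have part2: "(\<Prod>i\<in>{q..<n}. \<Prod>j\<in>{i<..<n}. F (z i) (z j)) = pp F (\<lambda>k. z (q + k)) (n - q)"
    unfolding img pp_def by (simp add: prod.reindex img2)
  have "pp F z n = (\<Prod>i<q. \<Prod>j\<in>{i<..<n}. F (z i) (z j)) * (\<Prod>i\<in>{q..<n}. \<Prod>j\<in>{i<..<n}. F (z i) (z j))"
    unfolding pp_def U by (rule prod.union_disjoint) auto
  then show ?thesis using part1 part2 by simp
qed

lemma ex_split:
  assumes "length lam = q"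
  shows "ex (lam @ mu) z = ex lam z * ex mu (\<lambda>k. z (q + k))"
proof -
  have e: "{..<length (lam @ mu)} = {..<q} \<union> {q..<q + length mu}" using assms by auto
  have "ex (lam @ mu) z = (\<Prod>i<q. z i ^ ((lam @ mu) ! i)) * (\<Prod>i\<in>{q..<q + length mu}. z i ^ ((lam @ mu) ! i))"
    unfolding ex_def e by (rule prod.union_disjoint) auto
  also have "(\<Prod>i<q. z i ^ ((lam @ mu) ! i)) = ex lam z"
    unfolding ex_def using assms by (simp add: nth_append)
  also have "(\<Prod>i\<in>{q..<q + length mu}. z i ^ ((lam @ mu) ! i)) = ex mu (\<lambda>k. z (q + k))"
  proof -
    have "{q..<q + length mu} = (\<lambda>k. q + k) ` {..<length mu}" using shift_img1[of q "q + length mu"] by simp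
    then show ?thesis unfolding ex_def using assms by (simp add: prod.reindex nth_append)
  qed
  finally show ?thesis .
qed

lemma cr_inv:
  fixes q n :: nat
  assumes "r \<in> Yg q n" "q \<le> n"
  shows "cr F (x \<circ> r) q n = cr F x q n"
proof -
  have r: "r permutes {..<n}" "r ` {..<q} = {..<q}" using assms by (auto simp: Yg_def)
  have rq: "r ` {q..<n} = {q..<n}" using perm_image_compl[OF r(1) assms(2)] r(2) assms(2) by auto
  have b1: "bij_betw r {..<q} {..<q}" using r permutes_inj_on[OF r(1)] by (simp add: bij_betw_def)
  have b2: "bij_betw r {q..<n} {q..<n}" using rq permutes_inj_on[OF r(1)] by (simp add: bij_betw_def)
  have "cr F (x \<circ> r) q n = (\<Prod>i<q. \<Prod>j\<in>{q..<n}. F (x (r i)) (x j))"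
    unfolding cr_def using prod.reindex_bij_betw[OF b2, of "\<lambda>j. F (x (r _)) (x j)"] by simp
  also have "\<dots> = cr F x q n"
    unfolding cr_def using prod.reindex_bij_betw[OF b1, of "\<lambda>i. \<Prod>j\<in>{q..<n}. F (x i) (x j)"] by simp
  finally show ?thesis .
qed

lemma pp_cong: "(\<And>i. i < m \<Longrightarrow> z i = z' i) \<Longrightarrow> pp F z m = pp F z' m"
  unfolding pp_def by (intro prod.cong refl) auto

lemma ex_cong: "(\<And>i. i < length lam \<Longrightarrow> z i = z' i) \<Longrightarrow> ex lam z = ex lam z'"
  unfolding ex_def by (intro prod.cong refl) auto

lemma field_id6:
  fixes eL eM a b c d e f g h :: "'a::field"
  shows "(eL * eM) * (a * b * c) / (d * e * f) = b / e * (eL * a / d) * (eM * c / f)"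
  by (simp add: divide_inverse inverse_mult_distrib ac_simps)

lemma G_join:
  fixes q n :: nat and x :: "nat \<Rightarrow> 'a::field"
  assumes qn: "q \<le> n" and s: "s permutes {..<q}" and u: "u permutes {..<n - q}"
    and lam: "length lam = q" and mu: "length mu = n - q"
  shows "ex (lam @ mu) (x \<circ> join q n s u) * pp Ft (x \<circ> join q n s u) n / pp Fm (x \<circ> join q n s u) n
    = cr Ft x q n / cr Fm x q n
      * (ex lam (x \<circ> s) * pp Ft (x \<circ> s) q / pp Fm (x \<circ> s) q)
      * (ex mu ((\<lambda>k. x (q + k)) \<circ> u) * pp Ft ((\<lambda>k. x (q + k)) \<circ> u) (n - q)
           / pp Fm ((\<lambda>k. x (q + k)) \<circ> u) (n - q))"
proof -
  define z where "z = x \<circ> join q n s u"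
  have jY: "join q n s u \<in> Yg q n"
    using bij_betwE[OF bij2[OF qn]] s u by fastforce
  have z1: "z i = (x \<circ> s) i" if "i < q" for i using that by (simp add: z_def join_def)
  have z2: "(\<lambda>k. z (q + k)) k = ((\<lambda>k. x (q + k)) \<circ> u) k" if "k < n - q" for k
  proof -
    have "q + k < n" using that by simp
    then show ?thesis by (simp add: z_def join_def)
  qed
  have crz: "cr F z q n = cr F x q n" for F :: "'a \<Rightarrow> 'a \<Rightarrow> 'a"
    unfolding z_def by (rule cr_inv[OF jY qn])
  have ppz: "pp F z n = pp F (x \<circ> s) q * cr F x q n * pp F ((\<lambda>k. x (q + k)) \<circ> u) (n - q)"
    for F :: "'a \<Rightarrow> 'a \<Rightarrow> 'a"
    using pp_split[OF qn, of F z] crz[of F] pp_cong[of q z "x \<circ> s" F, OF z1]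
      pp_cong[of "n - q" "\<lambda>k. z (q + k)" "(\<lambda>k. x (q + k)) \<circ> u" F, OF z2] by simp
  have exz: "ex (lam @ mu) z = ex lam (x \<circ> s) * ex mu ((\<lambda>k. x (q + k)) \<circ> u)"
    using ex_split[OF lam, of mu z] ex_cong[of lam z "x \<circ> s", OF z1[unfolded lam[symmetric]]]
      ex_cong[of mu "\<lambda>k. z (q + k)" "(\<lambda>k. x (q + k)) \<circ> u"] z2 mu lam by simp
  show ?thesis
    unfolding z_def[symmetric] exz ppz[of Ft] ppz[of Fm] by (rule field_id6)
qed

lemma R_fn_alt:
  "R_fn lam x t = (\<Sum>s | s permutes {..<length lam}.
      ex lam (x \<circ> s) * pp (\<lambda>a b. a - t * b) (x \<circ> s) (length lam)
        / pp (\<lambda>a b. a - b) (x \<circ> s) (length lam))"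
  unfolding R_fn_def flag_push_def ex_def pp_def by simp

lemma inner_sum:
  fixes q n :: nat and x :: "nat \<Rightarrow> 'a::field"
  assumes qn: "q \<le> n" and lam: "length lam = q" and mu: "length mu = n - q"
  shows "(\<Sum>\<rho>\<in>Yg q n. ex (lam @ mu) (x \<circ> \<rho>) * pp (\<lambda>a b. a - t * b) (x \<circ> \<rho>) n
            / pp (\<lambda>a b. a - b) (x \<circ> \<rho>) n)
    = cr (\<lambda>a b. a - t * b) x q n / cr (\<lambda>a b. a - b) x q n * R_fn lam x t * R_fn mu (\<lambda>k. x (q + k)) t"
proof -
  define Ft :: "'a \<Rightarrow> 'a \<Rightarrow> 'a" where "Ft = (\<lambda>a b. a - t * b)"
  define Fm :: "'a \<Rightarrow> 'a \<Rightarrow> 'a" where "Fm = (\<lambda>a b. a - b)"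
  define G where "G z = ex (lam @ mu) z * pp Ft z n / pp Fm z n" for z
  define A where "A s = ex lam (x \<circ> s) * pp Ft (x \<circ> s) q / pp Fm (x \<circ> s) q" for s
  define B where "B u = ex mu ((\<lambda>k. x (q + k)) \<circ> u) * pp Ft ((\<lambda>k. x (q + k)) \<circ> u) (n - q)
           / pp Fm ((\<lambda>k. x (q + k)) \<circ> u) (n - q)" for u
  define CE where "CE = cr Ft x q n / cr Fm x q n"
  have "(\<Sum>\<rho>\<in>Yg q n. G (x \<circ> \<rho>))
      = (\<Sum>p\<in>{s. s permutes {..<q}} \<times> {u. u permutes {..<n-q}}. G (x \<circ> (case p of (s, u) \<Rightarrow> join q n s u)))"
    using sum.reindex_bij_betw[OF bij2[OF qn], of "\<lambda>\<rho>. G (x \<circ> \<rho>)"] by simp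
  also have "\<dots> = (\<Sum>s | s permutes {..<q}. \<Sum>u | u permutes {..<n-q}. G (x \<circ> join q n s u))"
    by (simp add: sum.cartesian_product split_def)
  also have "\<dots> = (\<Sum>s | s permutes {..<q}. \<Sum>u | u permutes {..<n-q}. CE * A s * B u)"
    unfolding G_def CE_def A_def B_def
    by (intro sum.cong refl) (simp add: G_join[OF qn _ _ lam mu])
  also have "\<dots> = CE * (\<Sum>s | s permutes {..<q}. A s) * (\<Sum>u | u permutes {..<n-q}. B u)"
  proof -
    have "CE * (\<Sum>s | s permutes {..<q}. A s) * (\<Sum>u | u permutes {..<n-q}. B u)
       = CE * ((\<Sum>s | s permutes {..<q}. A s) * (\<Sum>u | u permutes {..<n-q}. B u))"
      by (rule mult.assoc)
    also have "\<dots> = CE * (\<Sum>s | s permutes {..<q}. \<Sum>u | u permutes {..<n-q}. A s * B u)"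
      by (simp only: sum_product)
    also have "\<dots> = (\<Sum>s | s permutes {..<q}. \<Sum>u | u permutes {..<n-q}. CE * A s * B u)"
      by (simp only: sum_distrib_left mult.assoc)
    finally show ?thesis by simp
  qed
  also have "(\<Sum>s | s permutes {..<q}. A s) = R_fn lam x t"
    unfolding R_fn_alt A_def Ft_def Fm_def lam ..
  also have "(\<Sum>u | u permutes {..<n-q}. B u) = R_fn mu (\<lambda>k. x (q + k)) t"
    unfolding R_fn_alt B_def Ft_def Fm_def mu ..
  finally show ?thesis unfolding G_def CE_def Ft_def Fm_def .
qed

theorem mainTheorem5:
  fixes q n :: nat and lam mu :: "nat list" and y :: "nat \<Rightarrow> 'a::field" and t :: 'a
  assumes "0 < q" and "q < n"
    and "length lam = q" and "length mu = n - q"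
    and "inj_on y {..<n}"
    and "v_seq lam t \<noteq> 0" and "v_seq mu t \<noteq> 0" and "v_seq (lam @ mu) t \<noteq> 0"
  shows "grass_push q n
           (\<lambda>x. (\<Prod>i<q. \<Prod>j\<in>{q..<n}. (x i - t * x j))
                 * P_fn lam x t * P_fn mu (\<lambda>k. x (q + k)) t) y
         = (v_seq (lam @ mu) t / (v_seq lam t * v_seq mu t)) * P_fn (lam @ mu) y t"
proof -
  have qn: "q \<le> n" using assms(2) by simp
  have lam: "length lam = q" and mu: "length mu = n - q" using assms by auto
  have len: "length (lam @ mu) = n" using lam mu qn by simp
  define Ft :: "'a \<Rightarrow> 'a \<Rightarrow> 'a" where "Ft = (\<lambda>a b. a - t * b)"
  define Fm :: "'a \<Rightarrow> 'a \<Rightarrow> 'a" where "Fm = (\<lambda>a b. a - b)"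
  define G where "G z = ex (lam @ mu) z * pp Ft z n / pp Fm z n" for z
  define vl where "vl = v_seq lam t"
  define vm where "vm = v_seq mu t"
  define T where "T x = cr Ft x q n / cr Fm x q n * R_fn lam x t * R_fn mu (\<lambda>k. x (q + k)) t" for x
  have "R_fn (lam @ mu) y t = (\<Sum>p | p permutes {..<n}. G (y \<circ> p))"
    unfolding R_fn_alt len G_def Ft_def Fm_def ..
  also have "\<dots> = (\<Sum>p\<in>Sh q n \<times> Yg q n. G (y \<circ> (case p of (w, r) \<Rightarrow> w \<circ> r)))"
    using sum.reindex_bij_betw[OF bij1[OF qn], of "\<lambda>p. G (y \<circ> p)"] by simp
  also have "\<dots> = (\<Sum>w\<in>Sh q n. \<Sum>r\<in>Yg q n. G ((y \<circ> w) \<circ> r))"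
    by (simp add: sum.cartesian_product split_def o_assoc)
  also have "\<dots> = (\<Sum>w\<in>Sh q n. T (y \<circ> w))"
    unfolding G_def T_def Ft_def Fm_def by (intro sum.cong refl inner_sum[OF qn lam mu])
  finally have R: "R_fn (lam @ mu) y t = (\<Sum>w\<in>Sh q n. T (y \<circ> w))" .
  have L: "grass_push q n
           (\<lambda>x. (\<Prod>i<q. \<Prod>j\<in>{q..<n}. (x i - t * x j))
                 * P_fn lam x t * P_fn mu (\<lambda>k. x (q + k)) t) y
     = (\<Sum>w\<in>Sh q n. cr Ft (y \<circ> w) q n * (R_fn lam (y \<circ> w) t / vl)
           * (R_fn mu (\<lambda>k. (y \<circ> w) (q + k)) t / vm) / cr Fm (y \<circ> w) q n)"
    unfolding grass_push_def Sh_def cr_def Ft_def Fm_def P_fn_def vl_def vm_def by simp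
  also have "\<dots> = (\<Sum>w\<in>Sh q n. T (y \<circ> w)) / (vl * vm)"
    unfolding sum_divide_distrib T_def by (intro sum.cong refl) (simp add: divide_inverse inverse_mult_distrib ac_simps)
  finally have L': "grass_push q n
           (\<lambda>x. (\<Prod>i<q. \<Prod>j\<in>{q..<n}. (x i - t * x j))
                 * P_fn lam x t * P_fn mu (\<lambda>k. x (q + k)) t) y = R_fn (lam @ mu) y t / (vl * vm)"
    using R by simp
  have E: "R_fn (lam @ mu) y t / (vl * vm)
      = v_seq (lam @ mu) t / (v_seq lam t * v_seq mu t) * P_fn (lam @ mu) y t"
    using assms(8) by (simp add: P_fn_def vl_def vm_def)
  show ?thesis using L' E by (rule trans)
qed

end
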